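(* Fix $\eta>0$. Consider the following game between Learner, Reality and $N$ experts. At each step $t=1,2,\dots$: each Expert $n$ ($n=1,\dots,N$) announces a prediction $\gamma_t^n\in[0,1]$ and a loss function $\lambda_t^n\in\mathcal{L}$ that is required to be $\eta$-mixable; then Learner announces $\pi_t\in[0,1]$; then Reality announces $\omega_t\in\{0,1\}$. Learner has a strategy that guarantees, for all $T\ge1$ and all $n=1,\dots,N$, $$\sum_{t=1}^T\lambda_t^n(\pi_t,\omega_t)\le\sum_{t=1}^T\lambda_t^n(\gamma_t^n,\omega_t)+\frac{\ln N}{\eta}.$$
   Context: A loss function is a map $\lambda:[0,1]\times\{0,1\}\to[0,\infty]$ satisfying: (1) $\lambda(\gamma,0)$ and $\lambda(\gamma,1)$ are continuous in $\gamma\in[0,1]$ (with the standard topology on $[0,\infty]$); (2) there exists $\gamma$ with $\lambda(\gamma,0),\lambda(\gamma,1)$ both finite; (3) there is no $\gamma$ with both infinite. The superprediction set is $\Sigma_\lambda=\{(x,y)\in[0,\infty)^2:\exists\gamma\ \lambda(\gamma,0)\le x,\ \lambda(\gamma,1)\le y\}$. For $\eta>0$, $\lambda$ is $\eta$-mixable if $\{(e^{-\eta x},e^{-\eta y}):(x,y)\in\Sigma_\lambda\}$ is convex; mixable if $\eta$-mixable for some $\eta>0$. $\lambda$ is proper if $\pi\lambda(\pi,1)+(1-\pi)\lambda(\pi,0)\le\pi\lambda(\pi',1)+(1-\pi)\lambda(\pi',0)$ for all $\pi,\pi'\in[0,1]$. $\mathcal{L}$ is the set of loss functions that are both mixable and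 proper. *)

theory Defs
  imports "HOL-Analysis.Analysis"
begin

text \<open>A loss is a map [0,1] x {0,1} -> [0,infinity]; we use type ennreal for [0,infinity]
  and encode outcomes omega as naturals restricted to {0,1}.\<close>

type_synonym loss = "real \<Rightarrow> nat \<Rightarrow> ennreal"

definition is_loss :: "loss \<Rightarrow> bool" where
  "is_loss l \<longleftrightarrow>
     continuous_on {0..1} (\<lambda>g. l g 0) \<and> continuous_on {0..1} (\<lambda>g. l g 1) \<and>
     (\<exists>g\<in>{0..1}. l g 0 < \<infinity> \<and> l g 1 < \<infinity>) \<and>
     \<not> (\<exists>g\<in>{0..1}. l g 0 = \<infinity> \<and> l g 1 = \<infinity>)"

definition superpred :: "loss \<Rightarrow> (real \<times> real) set" where
  "superpred l = {(x, y). 0 \<le> x \<and> 0 \<le> y \<and>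
      (\<exists>g\<in>{0..1}. l g 0 \<le> ennreal x \<and> l g 1 \<le> ennreal y)}"

definition eta_mixable :: "real \<Rightarrow> loss \<Rightarrow> bool" where
  "eta_mixable \<eta> l \<longleftrightarrow> convex ((\<lambda>(x, y). (exp (- \<eta> * x), exp (- \<eta> * y))) ` superpred l)"

definition mixable :: "loss \<Rightarrow> bool" where
  "mixable l \<longleftrightarrow> (\<exists>\<eta>>0. eta_mixable \<eta> l)"

definition proper :: "loss \<Rightarrow> bool" where
  "proper l \<longleftrightarrow> (\<forall>p\<in>{0..1}. \<forall>p'\<in>{0..1}.
     ennreal p * l p 1 + ennreal (1 - p) * l p 0 \<le> ennreal p * l p' 1 + ennreal (1 - p) * l p' 0)"

definition Lset :: "loss set" where
  "Lset = {l. is_loss l \<and> mixable l \<and> proper l}"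

text \<open>A Learner strategy maps the time t, the experts' predictions G s n, the experts' losses
  Ls s n and the outcomes w s to Learner's prediction at time t; it must be non-anticipating:
  it may depend only on experts' moves at times s \<le> t and outcomes at times s < t.\<close>

definition nonanticipating ::
  "(nat \<Rightarrow> (nat \<Rightarrow> nat \<Rightarrow> real) \<Rightarrow> (nat \<Rightarrow> nat \<Rightarrow> loss) \<Rightarrow> (nat \<Rightarrow> nat) \<Rightarrow> real) \<Rightarrow> bool" where
  "nonanticipating S \<longleftrightarrow> (\<forall>t G G' Ls Ls' w w'.
      (\<forall>s\<le>t. G s = G' s \<and> Ls s = Ls' s) \<and> (\<forall>s<t. w s = w' s) \<longrightarrow>
      S t G Ls w = S t G' Ls' w')"

end

theory Submission imports Defs begin

definition EE :: "real \<Rightarrow> ennreal \<Rightarrow> ennreal" where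
  "EE \<eta> x = (if x = \<infinity> then \<infinity> else ennreal (exp (\<eta> * enn2real x)))"

lemma EE_ge: assumes "\<eta> > 0" shows "ennreal \<eta> * x \<le> EE \<eta> x"
proof (cases "x = \<infinity>")
  case True then show ?thesis by (simp add: EE_def)
next
  case False
  then obtain r where r: "x = ennreal r" "r \<ge> 0" by (cases x) auto
  have "\<eta> * r \<le> exp (\<eta> * r)" using exp_ge_add_one_self[of "\<eta>*r"] by linarith
  then show ?thesis using r assms by (simp add: EE_def ennreal_mult[symmetric])
qed

lemma tendsto_EE:
  assumes "\<eta> > 0" "(f \<longlongrightarrow> x) F"
  shows "((\<lambda>y. EE \<eta> (f y)) \<longlongrightarrow> EE \<eta> x) F"
proof (cases "x = \<infinity>")
  case True
  have "((\<lambda>y. ennreal \<eta> * f y) \<longlongrightarrow> ennreal \<eta> * x) F"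
    by (rule ennreal_tendsto_cmult) (use assms in auto)
  then have t: "((\<lambda>y. ennreal \<eta> * f y) \<longlongrightarrow> \<infinity>) F" using True assms by (simp add: ennreal_mult_top)
  show ?thesis unfolding True
  proof (rule order_tendstoI)
    fix a assume "a < EE \<eta> \<infinity>"
    then have "a < \<infinity>" by (simp add: EE_def)
    from order_tendstoD(1)[OF t this] show "\<forall>\<^sub>F y in F. a < EE \<eta> (f y)"
      by eventually_elim (use EE_ge[OF assms(1)] in \<open>blast intro: less_le_trans\<close>)
  next
    fix a assume "EE \<eta> \<infinity> < a" then show "\<forall>\<^sub>F y in F. EE \<eta> (f y) < a" by (simp add: EE_def)
  qed
next
  case False
  then obtain r where r: "x = ennreal r" "r \<ge> 0" by (cases x) auto
  have ev: "\<forall>\<^sub>F y in F. f y < \<infinity>" using order_tendstoD(2)[OF assms(2)] False by (simp add: top.not_eq_extremum)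
  have "((\<lambda>y. enn2real (f y)) \<longlongrightarrow> r) F" using assms(2) r by (intro tendsto_enn2real) auto
  then have "((\<lambda>y. ennreal (exp (\<eta> * enn2real (f y)))) \<longlongrightarrow> ennreal (exp (\<eta> * r))) F"
    by (intro tendsto_ennrealI tendsto_exp tendsto_mult tendsto_const)
  moreover have "\<forall>\<^sub>F y in F. ennreal (exp (\<eta> * enn2real (f y))) = EE \<eta> (f y)"
    using ev by eventually_elim (simp add: EE_def)
  ultimately have "((\<lambda>y. EE \<eta> (f y)) \<longlongrightarrow> ennreal (exp (\<eta> * r))) F"
    by (rule Lim_transform_eventually)
  then show ?thesis using r by (simp add: EE_def)
qed

lemma core_real:
  fixes a0 a1 p :: real
  assumes "a0 > -1" "a1 > -1" "0 < p" "p < 1" "(1-p)*a0 + p*a1 > 0"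
  shows "\<exists>s. 0 < s \<and> s < 1 \<and> p * ln (1 + s*a1) + (1-p) * ln (1 + s*a0) > 0"
proof -
  define d where "d = (1-p)*a0 + p*a1"
  define M where "M = a0^2 + a1^2 + 1"
  have d: "d > 0" using assms d_def by simp
  have M: "M \<ge> 1" unfolding M_def by (simp add: add_nonneg_nonneg)
  define s where "s = min (1/2) (min (1/(2*(\<bar>a0\<bar>+\<bar>a1\<bar>+1))) (d/(4*M)))"
  have s0: "s > 0" using d M by (simp add: s_def)
  have s1: "s < 1" by (simp add: s_def)
  have sa: "s \<le> 1/(2*(\<bar>a0\<bar>+\<bar>a1\<bar>+1))" "s \<le> d/(4*M)" by (simp_all add: s_def)
  have b0: "\<bar>s*a0\<bar> \<le> 1/2"
  proof -
    have "\<bar>s*a0\<bar> = s*\<bar>a0\<bar>" using s0 by (simp add: abs_mult)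
    also have "\<dots> \<le> s*(\<bar>a0\<bar>+\<bar>a1\<bar>+1)" using s0 by (intro mult_left_mono) auto
    also have "\<dots> \<le> 1/2" using sa(1) by (simp add: field_simps)
    finally show ?thesis .
  qed
  have b1: "\<bar>s*a1\<bar> \<le> 1/2"
  proof -
    have "\<bar>s*a1\<bar> = s*\<bar>a1\<bar>" using s0 by (simp add: abs_mult)
    also have "\<dots> \<le> s*(\<bar>a0\<bar>+\<bar>a1\<bar>+1)" using s0 by (intro mult_left_mono) auto
    also have "\<dots> \<le> 1/2" using sa(1) by (simp add: field_simps)
    finally show ?thesis .
  qed
  have l0: "ln (1 + s*a0) \<ge> s*a0 - 2*(s*a0)^2" using abs_ln_one_plus_x_minus_x_bound[OF b0] by linarith
  have l1: "ln (1 + s*a1) \<ge> s*a1 - 2*(s*a1)^2" using abs_ln_one_plus_x_minus_x_bound[OF b1] by linarith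
  have "p * ln (1 + s*a1) + (1-p) * ln (1 + s*a0) \<ge> p*(s*a1 - 2*(s*a1)^2) + (1-p)*(s*a0 - 2*(s*a0)^2)"
    using l0 l1 assms by (intro add_mono mult_left_mono) auto
  also have "p*(s*a1 - 2*(s*a1)^2) + (1-p)*(s*a0 - 2*(s*a0)^2) = s*d - 2* s^2*(p*a1^2 + (1-p)*a0^2)"
    by (simp add: d_def power2_eq_square algebra_simps)
  also have "p*a1^2 + (1-p)*a0^2 \<le> M"
  proof -
    have "p*a1^2 \<le> a1^2" using assms by (intro mult_left_le_one_le) auto
    moreover have "(1-p)*a0^2 \<le> a0^2" using assms by (intro mult_left_le_one_le) auto
    ultimately show ?thesis unfolding M_def by linarith
  qed
  then have "s*d - 2* s^2*(p*a1^2 + (1-p)*a0^2) \<ge> s*d - 2* s^2*M"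
    using s0 by (simp add: mult_left_mono)
  also have "2* s^2*M \<le> s*d/2"
  proof -
    have "s*M \<le> d/4" using sa(2) M by (simp add: field_simps)
    then have "2* s*(s*M) \<le> 2* s*(d/4)" using s0 by (intro mult_left_mono) auto
    then show ?thesis by (simp add: power2_eq_square algebra_simps)
  qed
  then have "s*d - 2* s^2*M \<ge> s*d/2" by linarith
  finally have "p * ln (1 + s*a1) + (1-p) * ln (1 + s*a0) \<ge> s*d/2" by linarith
  moreover have "s*d/2 > 0" using s0 d by simp
  ultimately show ?thesis using s0 s1 by (intro exI[of _ s]) auto
qed

lemma proper_fin:
  assumes "l \<in> Lset" "0 < p" "p < 1"
  shows "l p 0 \<noteq> \<infinity>" "l p 1 \<noteq> \<infinity>"
proof -
  have pr: "proper l" and il: "is_loss l" using assms by (auto simp: Lset_def)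
  obtain g where g: "g \<in> {0..1}" "l g 0 < \<infinity>" "l g 1 < \<infinity>" using il by (auto simp: is_loss_def)
  have *: "ennreal p * l p 1 + ennreal (1 - p) * l p 0 \<le> ennreal p * l g 1 + ennreal (1 - p) * l g 0"
    using pr g assms by (auto simp: proper_def)
  have fin: "ennreal p * l g 1 + ennreal (1 - p) * l g 0 < \<infinity>"
    using g by (simp add: ennreal_mult_less_top)
  show "l p 0 \<noteq> \<infinity>"
  proof
    assume "l p 0 = \<infinity>"
    then have "ennreal p * l p 1 + ennreal (1 - p) * l p 0 = \<infinity>" using assms by (simp add: ennreal_mult_top)
    then have "ennreal p * l g 1 + ennreal (1 - p) * l g 0 = \<infinity>" using * by (metis infinity_ennreal_def top_unique)
    then show False using fin by auto
  qed
  show "l p 1 \<noteq> \<infinity>"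
  proof
    assume "l p 1 = \<infinity>"
    then have "ennreal p * l p 1 + ennreal (1 - p) * l p 0 = \<infinity>" using assms by (simp add: ennreal_mult_top)
    then have "ennreal p * l g 1 + ennreal (1 - p) * l g 0 = \<infinity>" using * by (metis infinity_ennreal_def top_unique)
    then show False using fin by auto
  qed
qed

lemma proper_end0:
  assumes "proper l" "g \<in> {0..1}" shows "l 0 0 \<le> l g 0"
proof -
  have "ennreal 0 * l 0 1 + ennreal (1 - 0) * l 0 0 \<le> ennreal 0 * l g 1 + ennreal (1 - 0) * l g 0"
    using assms unfolding proper_def by (meson atLeastAtMost_iff zero_le_one order_refl)
  then show ?thesis by simp
qed

lemma proper_end1:
  assumes "proper l" "g \<in> {0..1}" shows "l 1 1 \<le> l g 1"
proof -
  have "ennreal 1 * l 1 1 + ennreal (1 - 1) * l 1 0 \<le> ennreal 1 * l g 1 + ennreal (1 - 1) * l g 0"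
    using assms unfolding proper_def by (meson atLeastAtMost_iff zero_le_one order_refl)
  then show ?thesis by simp
qed

lemma in_C:
  assumes "0 \<le> x" "0 \<le> y" "g \<in> {0..1}" "l g 0 \<le> ennreal x" "l g 1 \<le> ennreal y"
  shows "(exp (- \<eta> * x), exp (- \<eta> * y)) \<in> (\<lambda>(x, y). (exp (- \<eta> * x), exp (- \<eta> * y))) ` superpred l"
  using assms by (intro image_eqI[where x="(x,y)"]) (auto simp: superpred_def)

lemma proper_real:
  assumes "proper l" "0 \<le> p" "p \<le> 1" "l p 0 = ennreal x" "l p 1 = ennreal y" "0 \<le> x" "0 \<le> y"
    and "(x'', y'') \<in> superpred l"
  shows "p * y + (1-p) * x \<le> p * y'' + (1-p) * x''"
proof -
  obtain g where g: "g \<in> {0..1}" "l g 0 \<le> ennreal x''" "l g 1 \<le> ennreal y''" "0 \<le> x''" "0 \<le> y''"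
    using assms(8) by (auto simp: superpred_def)
  have "\<forall>p'\<in>{0..1}. ennreal p * l p 1 + ennreal (1 - p) * l p 0 \<le> ennreal p * l p' 1 + ennreal (1 - p) * l p' 0"
    using assms(1,2,3) unfolding proper_def by simp
  then have "ennreal p * l p 1 + ennreal (1 - p) * l p 0 \<le> ennreal p * l g 1 + ennreal (1 - p) * l g 0"
    using g(1) by (rule bspec)
  also have "\<dots> \<le> ennreal p * ennreal y'' + ennreal (1 - p) * ennreal x''"
    using g by (intro add_mono mult_left_mono) auto
  finally have "ennreal (p * y + (1-p) * x) \<le> ennreal (p * y'' + (1-p) * x'')"
    using assms g by (simp add: ennreal_mult)
  then show ?thesis using assms g by (subst (asm) ennreal_le_iff) auto
qed

lemma geo:
  assumes eta: "\<eta> > 0" and L: "l \<in> Lset" and mix: "eta_mixable \<eta> l"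
    and p: "0 < p" "p < 1" and g: "0 < g" "g < 1"
  shows "p * exp (\<eta> * (enn2real (l p 1) - enn2real (l g 1)))
          + (1-p) * exp (\<eta> * (enn2real (l p 0) - enn2real (l g 0))) \<le> 1"
proof (rule ccontr)
  define x where "x = enn2real (l p 0)"
  define y where "y = enn2real (l p 1)"
  define x' where "x' = enn2real (l g 0)"
  define y' where "y' = enn2real (l g 1)"
  have pr: "proper l" using L by (auto simp: Lset_def)
  have lx: "l p 0 = ennreal x" "l p 1 = ennreal y" "l g 0 = ennreal x'" "l g 1 = ennreal y'"
    using proper_fin[OF L p] proper_fin[OF L g] unfolding x_def y_def x'_def y'_def
    by (auto simp: ennreal_enn2real_if)
  have nn: "0 \<le> x" "0 \<le> y" "0 \<le> x'" "0 \<le> y'" unfolding x_def y_def x'_def y'_def by auto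
  let ?C = "(\<lambda>(x, y). (exp (- \<eta> * x), exp (- \<eta> * y))) ` superpred l"
  have cv: "convex ?C" using mix by (simp add: eta_mixable_def)
  have Q: "(exp (- \<eta> * x), exp (- \<eta> * y)) \<in> ?C" using nn p lx by (intro in_C[of _ _ p]) auto
  have P: "(exp (- \<eta> * x'), exp (- \<eta> * y')) \<in> ?C" using nn g lx by (intro in_C[of _ _ g]) auto
  define a0 where "a0 = exp (\<eta> * (x - x')) - 1"
  define a1 where "a1 = exp (\<eta> * (y - y')) - 1"
  assume "\<not> p * exp (\<eta> * (enn2real (l p 1) - enn2real (l g 1)))
          + (1-p) * exp (\<eta> * (enn2real (l p 0) - enn2real (l g 0))) \<le> 1"
  then have "(1-p)*a0 + p*a1 > 0" unfolding a0_def a1_def x_def y_def x'_def y'_def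
    by (simp add: algebra_simps)
  moreover have "a0 > -1" "a1 > -1" unfolding a0_def a1_def by auto
  ultimately obtain s where s: "0 < s" "s < 1" "p * ln (1 + s*a1) + (1-p) * ln (1 + s*a0) > 0"
    using core_real p by blast
  have "(1-s) *\<^sub>R (exp (- \<eta> * x), exp (- \<eta> * y)) + s *\<^sub>R (exp (- \<eta> * x'), exp (- \<eta> * y')) \<in> ?C"
    using s by (intro convexD[OF cv Q P]) auto
  then obtain z where z: "z \<in> superpred l"
    and ze: "(1-s) *\<^sub>R (exp (- \<eta> * x), exp (- \<eta> * y)) + s *\<^sub>R (exp (- \<eta> * x'), exp (- \<eta> * y')) = (\<lambda>(x, y). (exp (- \<eta> * x), exp (- \<eta> * y))) z"
    by (rule imageE)
  obtain x'' y'' where zz: "z = (x'', y'')" by (cases z)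
  have sp: "(x'', y'') \<in> superpred l" using z zz by simp
  have e0: "exp (- \<eta> * x'') = (1-s) * exp (- \<eta> * x) + s * exp (- \<eta> * x')"
    and e1: "exp (- \<eta> * y'') = (1-s) * exp (- \<eta> * y) + s * exp (- \<eta> * y')"
    using ze unfolding zz by (simp_all add: prod_eq_iff)
  have pos0: "1 + s*a0 > 0"
  proof -
    have "s*a0 > s*(-1)" using s \<open>a0 > -1\<close> by (intro mult_strict_left_mono) auto
    then show ?thesis using s by linarith
  qed
  have pos1: "1 + s*a1 > 0"
  proof -
    have "s*a1 > s*(-1)" using s \<open>a1 > -1\<close> by (intro mult_strict_left_mono) auto
    then show ?thesis using s by linarith
  qed
  have "exp (- \<eta> * x'') = exp (- \<eta> * x) * (1 + s*a0)"
    unfolding e0 a0_def by (simp add: algebra_simps exp_add[symmetric])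
  then have "ln (exp (- \<eta> * x'')) = ln (exp (- \<eta> * x) * (1 + s*a0))" by simp
  then have x'': "- \<eta> * x'' = - \<eta> * x + ln (1 + s*a0)" using pos0 by (simp add: ln_mult)
  have "exp (- \<eta> * y'') = exp (- \<eta> * y) * (1 + s*a1)"
    unfolding e1 a1_def by (simp add: algebra_simps exp_add[symmetric])
  then have "ln (exp (- \<eta> * y'')) = ln (exp (- \<eta> * y) * (1 + s*a1))" by simp
  then have y'': "- \<eta> * y'' = - \<eta> * y + ln (1 + s*a1)" using pos1 by (simp add: ln_mult)
  have "p * y + (1-p) * x \<le> p * y'' + (1-p) * x''"
    using proper_real[OF pr _ _ lx(1,2) nn(1,2) sp] p by auto
  then have "\<eta> * (p * y + (1-p) * x) \<le> \<eta> * (p * y'' + (1-p) * x'')"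
    using eta by (intro mult_left_mono) auto
  also have "\<eta> * (p * y'' + (1-p) * x'') = p * (\<eta> * y'') + (1-p) * (\<eta> * x'')" by (simp add: algebra_simps)
  also have "\<dots> = p * (\<eta> * y - ln (1 + s*a1)) + (1-p) * (\<eta> * x - ln (1 + s*a0))"
    using x'' y'' by (simp add: algebra_simps)
  finally show False using s(3) by (simp add: algebra_simps)
qed

lemma cont_EE:
  assumes "\<eta> > 0" "continuous_on A f"
  shows "continuous_on A (\<lambda>x. EE \<eta> (f x))"
  using assms unfolding continuous_on_def by (auto intro: tendsto_EE)

lemma EE_fin: "x \<noteq> \<infinity> \<Longrightarrow> EE \<eta> x = ennreal (exp (\<eta> * enn2real x))"
  by (simp add: EE_def)

lemma EE_ratio:
  assumes "a \<le> b" "\<eta> > 0"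
  shows "EE \<eta> a * inverse (EE \<eta> b) \<le> 1"
proof (cases "b = \<infinity>")
  case True then show ?thesis by (simp add: EE_def)
next
  case False
  then have af: "a \<noteq> \<infinity>" using assms by (auto simp: top_unique)
  have "enn2real a \<le> enn2real b" using assms False by (simp add: enn2real_mono top.not_eq_extremum)
  then have le: "exp (\<eta> * enn2real a) \<le> exp (\<eta> * enn2real b)" using assms by simp
  have "EE \<eta> a * inverse (EE \<eta> b) = ennreal (exp (\<eta> * enn2real a)) * ennreal (inverse (exp (\<eta> * enn2real b)))"
    using af False by (simp add: EE_fin inverse_ennreal)
  also have "\<dots> = ennreal (exp (\<eta> * enn2real a) * inverse (exp (\<eta> * enn2real b)))"
    by (simp add: ennreal_mult)
  also have "\<dots> \<le> ennreal 1"
    using le by (intro ennreal_leI) (simp add: field_simps)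
  finally show ?thesis by simp
qed

definition Phi :: "real \<Rightarrow> loss \<Rightarrow> real \<Rightarrow> real \<Rightarrow> ennreal" where
  "Phi \<eta> l p g = ennreal p * EE \<eta> (l p 1) * inverse (EE \<eta> (l g 1))
                + ennreal (1-p) * EE \<eta> (l p 0) * inverse (EE \<eta> (l g 0))"

lemma Phi_interior:
  assumes eta: "\<eta> > 0" and L: "l \<in> Lset" and mix: "eta_mixable \<eta> l"
    and p: "0 < p" "p < 1" and g: "0 < g" "g < 1"
  shows "Phi \<eta> l p g \<le> 1"
proof -
  have f: "l p 0 \<noteq> \<infinity>" "l p 1 \<noteq> \<infinity>" "l g 0 \<noteq> \<infinity>" "l g 1 \<noteq> \<infinity>"
    using proper_fin[OF L p] proper_fin[OF L g] by auto
  have e: "exp (\<eta> * a) * inverse (exp (\<eta> * b)) = exp (\<eta> * (a - b))" for a b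
    by (simp add: algebra_simps exp_diff divide_inverse)
  have "Phi \<eta> l p g = ennreal (p * exp (\<eta> * (enn2real (l p 1) - enn2real (l g 1)))
          + (1-p) * exp (\<eta> * (enn2real (l p 0) - enn2real (l g 0))))"
    using f p unfolding Phi_def
    by (simp add: EE_fin inverse_ennreal ennreal_mult[symmetric] e[symmetric] mult.assoc)
  also have "\<dots> \<le> ennreal 1" using geo[OF eta L mix p g] by (intro ennreal_leI)
  finally show ?thesis by simp
qed

lemma Phi_le1:
  assumes eta: "\<eta> > 0" and L: "l \<in> Lset" and mix: "eta_mixable \<eta> l"
    and p: "0 \<le> p" "p \<le> 1" and g: "0 \<le> g" "g \<le> 1"
  shows "Phi \<eta> l p g \<le> 1"
proof -
  have pr: "proper l" and il: "is_loss l" using L by (auto simp: Lset_def)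
  consider "p = 0" | "p = 1" | "0 < p \<and> p < 1" using p by linarith
  then show ?thesis
  proof cases
    case 1
    have "Phi \<eta> l p g = EE \<eta> (l 0 0) * inverse (EE \<eta> (l g 0))" using 1 by (simp add: Phi_def)
    also have "\<dots> \<le> 1" using proper_end0[OF pr] g eta by (intro EE_ratio) auto
    finally show ?thesis .
  next
    case 2
    have "Phi \<eta> l p g = EE \<eta> (l 1 1) * inverse (EE \<eta> (l g 1))" using 2 by (simp add: Phi_def)
    also have "\<dots> \<le> 1" using proper_end1[OF pr] g eta by (intro EE_ratio) auto
    finally show ?thesis .
  next
    case 3
    have f: "l p 0 \<noteq> \<infinity>" "l p 1 \<noteq> \<infinity>" using proper_fin[OF L] 3 by auto
    have c0: "continuous_on {0..1} (\<lambda>g. l g 0)" and c1: "continuous_on {0..1} (\<lambda>g. l g 1)"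
      using il by (auto simp: is_loss_def)
    have cont: "continuous_on {0..1} (Phi \<eta> l p)"
      unfolding Phi_def
      by (intro continuous_on_add_ennreal ennreal_continuous_on_cmult continuous_on_inverse_ennreal
          cont_EE[OF eta] c0 c1) (use f in \<open>simp_all add: EE_fin ennreal_mult_less_top\<close>)
    consider "g = 0" | "g = 1" | "0 < g \<and> g < 1" using g by linarith
    then show ?thesis
    proof cases
      case 1
      have "(Phi \<eta> l p \<longlongrightarrow> Phi \<eta> l p 0) (at_right 0)"
        using continuous_on_Icc_at_rightD[OF cont] by simp
      moreover have "eventually (\<lambda>g. Phi \<eta> l p g \<le> 1) (at_right 0)"
        by (rule eventually_at_rightI[where b=1]) (use Phi_interior[OF eta L mix] 3 in auto)
      ultimately have "Phi \<eta> l p 0 \<le> 1" by (intro tendsto_upperbound) auto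
      then show ?thesis using 1 by simp
    next
      case 2
      have "(Phi \<eta> l p \<longlongrightarrow> Phi \<eta> l p 1) (at_left 1)"
        using continuous_on_Icc_at_leftD[OF cont] by simp
      moreover have "eventually (\<lambda>g. Phi \<eta> l p g \<le> 1) (at_left 1)"
        by (rule eventually_at_leftI[where a=0]) (use Phi_interior[OF eta L mix] 3 in auto)
      ultimately have "Phi \<eta> l p 1 \<le> 1" by (intro tendsto_upperbound) auto
      then show ?thesis using 2 by simp
    next
      case 3
      then show ?thesis using Phi_interior[OF eta L mix] \<open>0 < p \<and> p < 1\<close> by auto
    qed
  qed
qed

lemma EE_pos: "EE \<eta> x > 0"
  by (simp add: EE_def)

lemma inv_EE_fin: "inverse (EE \<eta> x) < \<infinity>"
  using EE_pos[of \<eta> x] by (simp add: top.not_eq_extremum[symmetric])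

definition AA :: "real \<Rightarrow> nat set \<Rightarrow> (nat \<Rightarrow> ennreal) \<Rightarrow> (nat \<Rightarrow> real) \<Rightarrow> (nat \<Rightarrow> loss) \<Rightarrow> nat \<Rightarrow> real \<Rightarrow> ennreal" where
  "AA \<eta> I u gam l w p = (\<Sum>n\<in>I. u n * EE \<eta> (l n p w) * inverse (EE \<eta> (l n (gam n) w)))"

lemma AA_mix:
  assumes eta: "\<eta> > 0" and I: "\<And>n. n \<in> I \<Longrightarrow> gam n \<in> {0..1} \<and> l n \<in> Lset \<and> eta_mixable \<eta> (l n)"
    and p: "0 \<le> p" "p \<le> 1"
  shows "ennreal p * AA \<eta> I u gam l 1 p + ennreal (1-p) * AA \<eta> I u gam l 0 p \<le> (\<Sum>n\<in>I. u n)"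
proof -
  have "ennreal p * AA \<eta> I u gam l 1 p + ennreal (1-p) * AA \<eta> I u gam l 0 p
      = (\<Sum>n\<in>I. u n * Phi \<eta> (l n) p (gam n))"
    unfolding AA_def Phi_def by (simp add: sum_distrib_left sum.distrib[symmetric] distrib_left mult.assoc mult.left_commute)
  also have "\<dots> \<le> (\<Sum>n\<in>I. u n * 1)"
    using I p eta by (intro sum_mono mult_left_mono Phi_le1) auto
  finally show ?thesis by simp
qed

lemma AA_cont:
  assumes eta: "\<eta> > 0" and I: "\<And>n. n \<in> I \<Longrightarrow> gam n \<in> {0..1} \<and> l n \<in> Lset \<and> eta_mixable \<eta> (l n)"
    and u: "\<And>n. n \<in> I \<Longrightarrow> u n < \<infinity>" and w: "w \<in> {0,1}"
  shows "continuous_on {0..1} (AA \<eta> I u gam l w)"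
proof -
  have "AA \<eta> I u gam l w = (\<lambda>p. \<Sum>n\<in>I. (u n * inverse (EE \<eta> (l n (gam n) w))) * EE \<eta> (l n p w))"
    unfolding AA_def by (simp add: mult.commute mult.left_commute)
  moreover have "continuous_on {0..1} (\<lambda>p. \<Sum>n\<in>I. (u n * inverse (EE \<eta> (l n (gam n) w))) * EE \<eta> (l n p w))"
  proof (intro continuous_on_sum ennreal_continuous_on_cmult cont_EE[OF eta])
    fix n assume n: "n \<in> I"
    show "u n * inverse (EE \<eta> (l n (gam n) w)) < top"
      using u[OF n] inv_EE_fin[of \<eta>] by (simp add: ennreal_mult_less_top)
    have il: "is_loss (l n)" using I[OF n] by (auto simp: Lset_def)
    show "continuous_on {0..1} (\<lambda>p. l n p w)"
    proof (cases "w = 0")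
      case True then show ?thesis using il by (simp add: is_loss_def)
    next
      case False
      then have "w = 1" using w by auto
      then show ?thesis using il by (simp add: is_loss_def)
    qed
  qed
  ultimately show ?thesis by simp
qed

lemma enn2real_cont:
  assumes "continuous_on S f" "\<And>x. x \<in> S \<Longrightarrow> f x < \<infinity>"
  shows "continuous_on S (\<lambda>x. enn2real (f x))"
  unfolding continuous_on_def
proof
  fix x assume x: "x \<in> S"
  have "(f \<longlongrightarrow> f x) (at x within S)" using assms(1) x by (simp add: continuous_on_def)
  then have "(f \<longlongrightarrow> ennreal (enn2real (f x))) (at x within S)"
    using assms(2)[OF x] by (simp add: ennreal_enn2real)
  then show "((\<lambda>x. enn2real (f x)) \<longlongrightarrow> enn2real (f x)) (at x within S)"
    by (rule tendsto_enn2real) simp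
qed

lemma enn2real_strict: "(x::ennreal) < y \<Longrightarrow> y < top \<Longrightarrow> enn2real x < enn2real y"
  by (cases x rule: ennreal_cases; cases y rule: ennreal_cases) (auto simp: ennreal_less_iff)

lemma AA_exists:
  assumes eta: "\<eta> > 0" and I: "\<And>n. n \<in> I \<Longrightarrow> gam n \<in> {0..1} \<and> l n \<in> Lset \<and> eta_mixable \<eta> (l n)"
    and u: "\<And>n. n \<in> I \<Longrightarrow> u n < \<infinity>" and fI: "finite I"
  shows "\<exists>p\<in>{0..1}. AA \<eta> I u gam l 1 p \<le> (\<Sum>n\<in>I. u n) \<and> AA \<eta> I u gam l 0 p \<le> (\<Sum>n\<in>I. u n)"
proof -
  define U where "U = (\<Sum>n\<in>I. u n)"
  define A0 where "A0 = AA \<eta> I u gam l 0"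
  define A1 where "A1 = AA \<eta> I u gam l 1"
  have Ufin: "U < \<infinity>" unfolding U_def using u fI by (simp add: top.not_eq_extremum[symmetric])
  have mix: "ennreal p * A1 p + ennreal (1-p) * A0 p \<le> U" if "0 \<le> p" "p \<le> 1" for p
    unfolding A0_def A1_def U_def by (rule AA_mix[OF eta I that])
  have c0: "continuous_on {0..1} A0" unfolding A0_def by (rule AA_cont[OF eta I u]) auto
  have c1: "continuous_on {0..1} A1" unfolding A1_def by (rule AA_cont[OF eta I u]) auto
  have fin0: "A0 p < \<infinity>" if "0 \<le> p" "p < 1" for p
  proof -
    have "ennreal (1-p) * A0 p \<le> ennreal p * A1 p + ennreal (1-p) * A0 p" by (rule add_increasing) simp_all
    then have "ennreal (1-p) * A0 p \<le> U" using mix[of p] that by (meson order_trans less_imp_le)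
    then have "ennreal (1-p) * A0 p < \<infinity>" using Ufin by (rule le_less_trans)
    then show ?thesis using that by (auto simp: ennreal_mult_less_top top.not_eq_extremum)
  qed
  have fin1: "A1 p < \<infinity>" if "0 < p" "p \<le> 1" for p
  proof -
    have "ennreal p * A1 p \<le> ennreal p * A1 p + ennreal (1-p) * A0 p" by (rule add_increasing2) simp_all
    then have "ennreal p * A1 p \<le> U" using mix[of p] that by (meson order_trans less_imp_le)
    then have "ennreal p * A1 p < \<infinity>" using Ufin by (rule le_less_trans)
    then show ?thesis using that by (auto simp: ennreal_mult_less_top top.not_eq_extremum)
  qed
  have "\<exists>p\<in>{0..1}. A1 p \<le> U \<and> A0 p \<le> U"
  proof -
  consider "A1 0 \<le> A0 0" | "A0 1 \<le> A1 1" | "A0 0 < A1 0 \<and> A1 1 < A0 1" using not_le by blast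
  then show ?thesis
  proof cases
    case 1
    have "A0 0 \<le> U" using mix[of 0] by simp
    then show ?thesis using 1 by (intro bexI[of _ 0]) auto
  next
    case 2
    have "A1 1 \<le> U" using mix[of 1] by simp
    then show ?thesis using 2 by (intro bexI[of _ 1]) auto
  next
    case 3
    obtain c where c: "A0 0 < c" "c < A1 0" using 3 dense by blast
    have "eventually (\<lambda>p. A0 p < c) (at_right 0)"
      using order_tendstoD(2)[OF continuous_on_Icc_at_rightD[OF c0] c(1)] by simp
    moreover have "eventually (\<lambda>p. c < A1 p) (at_right 0)"
      using order_tendstoD(1)[OF continuous_on_Icc_at_rightD[OF c1] c(2)] by simp
    moreover have "eventually (\<lambda>p. 0 < p \<and> p < (1::real)) (at_right 0)"
      by (rule eventually_at_rightI[where b=1]) auto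
    ultimately have "eventually (\<lambda>p. A0 p < A1 p \<and> 0 < p \<and> p < 1) (at_right 0)"
      by eventually_elim auto
    then obtain a where a: "A0 a < A1 a" "0 < a" "a < 1"
      using eventually_happens'[of "at_right (0::real)"] by auto
    obtain d where d: "A1 1 < d" "d < A0 1" using 3 dense by blast
    have "eventually (\<lambda>p. A1 p < d) (at_left 1)"
      using order_tendstoD(2)[OF continuous_on_Icc_at_leftD[OF c1] d(1)] by simp
    moreover have "eventually (\<lambda>p. d < A0 p) (at_left 1)"
      using order_tendstoD(1)[OF continuous_on_Icc_at_leftD[OF c0] d(2)] by simp
    moreover have "eventually (\<lambda>p. 0 < p \<and> p < (1::real)) (at_left 1)"
      by (rule eventually_at_leftI[where a=0]) auto
    ultimately have "eventually (\<lambda>p. A1 p < A0 p \<and> 0 < p \<and> p < 1) (at_left 1)"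
      by eventually_elim auto
    then obtain b where b: "A1 b < A0 b" "0 < b" "b < 1"
      using eventually_happens'[of "at_left (1::real)"] by auto
    define h where "h p = enn2real (A1 p) - enn2real (A0 p)" for p
    have ch: "continuous_on {min a b..max a b} h"
    proof -
      have sub: "{min a b..max a b} \<subseteq> {0..1}" using a b by auto
      have "continuous_on {min a b..max a b} (\<lambda>p. enn2real (A1 p))"
        using a b by (intro enn2real_cont continuous_on_subset[OF c1 sub] fin1) auto
      moreover have "continuous_on {min a b..max a b} (\<lambda>p. enn2real (A0 p))"
        using a b by (intro enn2real_cont continuous_on_subset[OF c0 sub] fin0) auto
      ultimately show ?thesis unfolding h_def by (intro continuous_on_diff)
    qed
    have ha: "h a > 0" unfolding h_def using a fin0[of a] fin1[of a] enn2real_strict[of "A0 a" "A1 a"]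
      by simp
    have hb: "h b < 0" unfolding h_def using b fin0[of b] fin1[of b] enn2real_strict[of "A1 b" "A0 b"]
      by simp
    have "\<exists>x. min a b \<le> x \<and> x \<le> max a b \<and> h x = 0"
    proof (cases "a \<le> b")
      case True
      then show ?thesis using IVT2'[of h b 0 a] ch ha hb by auto
    next
      case False
      then show ?thesis using IVT'[of h b 0 a] ch ha hb by auto
    qed
    then obtain x where x: "min a b \<le> x" "x \<le> max a b" "h x = 0" by blast
    have x01: "0 < x" "x < 1" using x a b by auto
    have e: "enn2real (A1 x) = enn2real (A0 x)" using x(3) unfolding h_def by simp
    have f0: "A0 x < top" and f1: "A1 x < top" using fin0[of x] fin1[of x] x01 by auto
    have "A1 x = ennreal (enn2real (A1 x))" by (rule ennreal_enn2real[OF f1, symmetric])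
    also have "\<dots> = ennreal (enn2real (A0 x))" by (simp only: e)
    also have "\<dots> = A0 x" by (rule ennreal_enn2real[OF f0])
    finally have "A1 x = A0 x" .
    have s1: "ennreal x + ennreal (1-x) = 1"
    proof -
      have "ennreal (x + (1-x)) = ennreal x + ennreal (1-x)" using x01 by (intro ennreal_plus) auto
      then show ?thesis by simp
    qed
    have "A1 x = (ennreal x + ennreal (1-x)) * A1 x" by (simp only: s1 mult_1)
    also have "\<dots> = ennreal x * A1 x + ennreal (1-x) * A0 x" by (simp only: distrib_right \<open>A1 x = A0 x\<close>)
    also have "\<dots> \<le> U" by (rule mix) (use x01 in auto)
    finally have "A1 x \<le> U" .
    then have "A0 x \<le> U" using \<open>A1 x = A0 x\<close> by simp
    moreover have "x \<in> {0..1}" using x01 by auto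
    ultimately show ?thesis using \<open>A1 x \<le> U\<close> by blast
  qed
qed
  then show ?thesis unfolding A0_def A1_def U_def .
qed

lemma final_ineq:
  fixes a b :: "nat \<Rightarrow> ennreal"
  assumes eta: "\<eta> > 0" and F: "finite F"
    and P: "(\<Prod>t\<in>F. EE \<eta> (a t) * inverse (EE \<eta> (b t))) \<le> ennreal M" and M: "M \<ge> 1"
  shows "(\<Sum>t\<in>F. a t) \<le> (\<Sum>t\<in>F. b t) + ennreal (ln M / \<eta>)"
proof (cases "\<exists>t\<in>F. b t = \<infinity>")
  case True
  then have "(\<Sum>t\<in>F. b t) = top" using F by simp
  then show ?thesis by simp
next
  case False
  then have bf: "\<And>t. t \<in> F \<Longrightarrow> b t \<noteq> top" by auto
  show ?thesis
  proof (cases "\<exists>t\<in>F. a t = \<infinity>")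
    case True
    have "(\<Prod>t\<in>F. EE \<eta> (a t) * inverse (EE \<eta> (b t))) = top"
    proof (subst ennreal_prod_eq_top, intro conjI ballI)
      show "finite F" by (rule F)
      fix t assume t: "t \<in> F"
      show "EE \<eta> (a t) * inverse (EE \<eta> (b t)) \<noteq> 0"
        using EE_pos[of \<eta> "a t"] bf[OF t] by (simp add: EE_def)
    next
      from True obtain t where t: "t \<in> F" "a t = \<infinity>" by blast
      have "EE \<eta> (a t) * inverse (EE \<eta> (b t)) = top"
        using t bf[OF t(1)] by (simp add: EE_def ennreal_mult_eq_top_iff)
      then show "\<exists>t\<in>F. EE \<eta> (a t) * inverse (EE \<eta> (b t)) = top" using t by blast
    qed
    then show ?thesis using P by (simp add: top_unique)
  next
    case False
    then have af: "\<And>t. t \<in> F \<Longrightarrow> a t \<noteq> top" by auto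
    define a' where "a' t = enn2real (a t)" for t
    define b' where "b' t = enn2real (b t)" for t
    have ae: "a t = ennreal (a' t)" if "t \<in> F" for t
      using af[OF that] unfolding a'_def by (simp add: ennreal_enn2real_if)
    have be: "b t = ennreal (b' t)" if "t \<in> F" for t
      using bf[OF that] unfolding b'_def by (simp add: ennreal_enn2real_if)
    have fac: "EE \<eta> (a t) * inverse (EE \<eta> (b t)) = ennreal (exp (\<eta> * (a' t - b' t)))" if "t \<in> F" for t
    proof -
      have "EE \<eta> (a t) * inverse (EE \<eta> (b t)) = ennreal (exp (\<eta> * a' t)) * ennreal (inverse (exp (\<eta> * b' t)))"
        using af[OF that] bf[OF that] unfolding a'_def b'_def by (simp add: EE_fin inverse_ennreal)
      also have "\<dots> = ennreal (exp (\<eta> * a' t) * inverse (exp (\<eta> * b' t)))" by (simp add: ennreal_mult)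
      also have "exp (\<eta> * a' t) * inverse (exp (\<eta> * b' t)) = exp (\<eta> * (a' t - b' t))"
        by (simp add: algebra_simps exp_diff divide_inverse)
      finally show ?thesis .
    qed
    have "(\<Prod>t\<in>F. EE \<eta> (a t) * inverse (EE \<eta> (b t))) = (\<Prod>t\<in>F. ennreal (exp (\<eta> * (a' t - b' t))))"
      using fac by (rule prod.cong[OF refl])
    also have "\<dots> = ennreal (\<Prod>t\<in>F. exp (\<eta> * (a' t - b' t)))" by (rule prod_ennreal) simp
    also have "(\<Prod>t\<in>F. exp (\<eta> * (a' t - b' t))) = exp (\<Sum>t\<in>F. \<eta> * (a' t - b' t))"
      by (simp add: exp_sum F)
    finally have "ennreal (exp (\<Sum>t\<in>F. \<eta> * (a' t - b' t))) \<le> ennreal M" using P by simp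
    then have "exp (\<Sum>t\<in>F. \<eta> * (a' t - b' t)) \<le> M" using M by (subst (asm) ennreal_le_iff) auto
    then have "(\<Sum>t\<in>F. \<eta> * (a' t - b' t)) \<le> ln M"
    proof -
      assume h: "exp (\<Sum>t\<in>F. \<eta> * (a' t - b' t)) \<le> M"
      have "(\<Sum>t\<in>F. \<eta> * (a' t - b' t)) = ln (exp (\<Sum>t\<in>F. \<eta> * (a' t - b' t)))" by simp
      also have "\<dots> \<le> ln M" using h M by (subst ln_le_cancel_iff) auto
      finally show ?thesis .
    qed
    then have "\<eta> * ((\<Sum>t\<in>F. a' t) - (\<Sum>t\<in>F. b' t)) \<le> ln M"
      by (simp add: sum_distrib_left[symmetric] sum_subtractf)
    then have "(\<Sum>t\<in>F. a' t) - (\<Sum>t\<in>F. b' t) \<le> ln M / \<eta>" using eta by (simp add: field_simps)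
    then have le: "(\<Sum>t\<in>F. a' t) \<le> (\<Sum>t\<in>F. b' t) + ln M / \<eta>" by linarith
    have "(\<Sum>t\<in>F. a t) = (\<Sum>t\<in>F. ennreal (a' t))" using ae by (rule sum.cong[OF refl])
    also have "\<dots> = ennreal (\<Sum>t\<in>F. a' t)" by (rule sum_ennreal) (simp add: a'_def)
    also have "\<dots> \<le> ennreal ((\<Sum>t\<in>F. b' t) + ln M / \<eta>)" using le by (rule ennreal_leI)
    also have "\<dots> = ennreal (\<Sum>t\<in>F. b' t) + ennreal (ln M / \<eta>)"
      using M eta by (intro ennreal_plus) (auto simp: b'_def sum_nonneg)
    also have "ennreal (\<Sum>t\<in>F. b' t) = (\<Sum>t\<in>F. ennreal (b' t))" by (rule sum_ennreal[symmetric]) (simp add: b'_def)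
    also have "\<dots> = (\<Sum>t\<in>F. b t)" using be by (intro sum.cong[OF refl]) simp
    finally show ?thesis .
  qed
qed

definition Good :: "real \<Rightarrow> nat \<Rightarrow> (nat \<Rightarrow> ennreal) \<Rightarrow> (nat \<Rightarrow> real) \<Rightarrow> (nat \<Rightarrow> loss) \<Rightarrow> real \<Rightarrow> bool" where
  "Good \<eta> N u gam l p \<longleftrightarrow> AA \<eta> {1..N} u gam l 1 p \<le> (\<Sum>n\<in>{1..N}. u n) \<and> AA \<eta> {1..N} u gam l 0 p \<le> (\<Sum>n\<in>{1..N}. u n)"

definition pickp :: "real \<Rightarrow> nat \<Rightarrow> (nat \<Rightarrow> ennreal) \<Rightarrow> (nat \<Rightarrow> real) \<Rightarrow> (nat \<Rightarrow> loss) \<Rightarrow> real" where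
  "pickp \<eta> N u gam l = (SOME p. p \<in> {0..1} \<and> ((\<exists>q\<in>{0..1}. Good \<eta> N u gam l q) \<longrightarrow> Good \<eta> N u gam l p))"

lemma pickp_prop:
  "pickp \<eta> N u gam l \<in> {0..1} \<and> ((\<exists>q\<in>{0..1}. Good \<eta> N u gam l q) \<longrightarrow> Good \<eta> N u gam l (pickp \<eta> N u gam l))"
  unfolding pickp_def
proof (rule someI_ex)
  show "\<exists>p. p \<in> {0..1} \<and> ((\<exists>q\<in>{0..1}. Good \<eta> N u gam l q) \<longrightarrow> Good \<eta> N u gam l p)"
  proof (cases "\<exists>q\<in>{0..1}. Good \<eta> N u gam l q")
    case True then show ?thesis by blast
  next
    case False then show ?thesis by (intro exI[of _ 0]) auto
  qed
qed

primrec Wt :: "real \<Rightarrow> nat \<Rightarrow> nat \<Rightarrow> (nat \<Rightarrow> nat \<Rightarrow> real) \<Rightarrow> (nat \<Rightarrow> nat \<Rightarrow> loss) \<Rightarrow> (nat \<Rightarrow> nat) \<Rightarrow> nat \<Rightarrow> ennreal" where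
  "Wt \<eta> N 0 G Ls w = (\<lambda>n. 1)"
| "Wt \<eta> N (Suc t) G Ls w = (\<lambda>n. if t = 0 then 1 else
      Wt \<eta> N t G Ls w n * EE \<eta> (Ls t n (pickp \<eta> N (Wt \<eta> N t G Ls w) (G t) (Ls t)) (w t))
        * inverse (EE \<eta> (Ls t n (G t n) (w t))))"

definition Strat :: "real \<Rightarrow> nat \<Rightarrow> nat \<Rightarrow> (nat \<Rightarrow> nat \<Rightarrow> real) \<Rightarrow> (nat \<Rightarrow> nat \<Rightarrow> loss) \<Rightarrow> (nat \<Rightarrow> nat) \<Rightarrow> real" where
  "Strat \<eta> N t G Ls w = pickp \<eta> N (Wt \<eta> N t G Ls w) (G t) (Ls t)"

lemma Wt_local:
  "(\<forall>s<t. G s = G' s \<and> Ls s = Ls' s \<and> w s = w' s) \<Longrightarrow> Wt \<eta> N t G Ls w = Wt \<eta> N t G' Ls' w'"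
proof (induction t)
  case 0 then show ?case by simp
next
  case (Suc t)
  then have IH: "Wt \<eta> N t G Ls w = Wt \<eta> N t G' Ls' w'" by auto
  have e: "G t = G' t" "Ls t = Ls' t" "w t = w' t" using Suc.prems by auto
  show ?case unfolding Wt.simps IH e by (rule refl)
qed

lemma Strat_nonant: "nonanticipating (Strat \<eta> N)"
  unfolding nonanticipating_def
proof (intro allI impI)
  fix t :: nat and G G' :: "nat \<Rightarrow> nat \<Rightarrow> real" and Ls Ls' :: "nat \<Rightarrow> nat \<Rightarrow> loss" and w w' :: "nat \<Rightarrow> nat"
  assume h: "(\<forall>s\<le>t. G s = G' s \<and> Ls s = Ls' s) \<and> (\<forall>s<t. w s = w' s)"
  then have "Wt \<eta> N t G Ls w = Wt \<eta> N t G' Ls' w'" by (intro Wt_local) auto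
  moreover have "G t = G' t" "Ls t = Ls' t" using h by auto
  ultimately show "Strat \<eta> N t G Ls w = Strat \<eta> N t G' Ls' w'" by (simp add: Strat_def)
qed

lemma Strat_01: "Strat \<eta> N t G Ls w \<in> {0..1}"
  unfolding Strat_def using pickp_prop by blast

lemma Wt_sum_step:
  assumes "t \<noteq> 0"
  shows "(\<Sum>n\<in>{1..N}. Wt \<eta> N (Suc t) G Ls w n) = AA \<eta> {1..N} (Wt \<eta> N t G Ls w) (G t) (Ls t) (w t) (Strat \<eta> N t G Ls w)"
  using assms by (simp add: AA_def Strat_def)

lemma Wt_bound:
  assumes eta: "\<eta> > 0"
    and H: "\<forall>t\<ge>1. \<forall>n\<in>{1..N}. G t n \<in> {0..1} \<and> Ls t n \<in> Lset \<and> eta_mixable \<eta> (Ls t n)"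
    and Hw: "\<forall>t\<ge>1. w t \<in> {0, 1}"
    and t: "t \<ge> 1"
  shows "(\<Sum>n\<in>{1..N}. Wt \<eta> N t G Ls w n) \<le> ennreal (real N)"
  using t
proof (induction t rule: dec_induct)
  case base
  have "(\<Sum>n\<in>{1..N}. Wt \<eta> N 1 G Ls w n) = of_nat N" by simp
  then show ?case by (simp add: ennreal_of_nat_eq_real_of_nat)
next
  case (step t)
  let ?u = "Wt \<eta> N t G Ls w"
  have t0: "t \<noteq> 0" using step by simp
  have fin: "?u n < \<infinity>" if "n \<in> {1..N}" for n
  proof -
    have "?u n \<le> (\<Sum>n\<in>{1..N}. ?u n)" using that by (intro member_le_sum) auto
    also have "\<dots> \<le> ennreal (real N)" by (rule step.IH)
    finally show ?thesis by (simp add: top.not_eq_extremum le_less_trans)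
  qed
  have HI: "\<And>n. n \<in> {1..N} \<Longrightarrow> G t n \<in> {0..1} \<and> Ls t n \<in> Lset \<and> eta_mixable \<eta> (Ls t n)"
    using H step by auto
  have "\<exists>q\<in>{0..1}. Good \<eta> N ?u (G t) (Ls t) q"
    using AA_exists[where I="{1..N}" and gam="G t" and l="Ls t" and u="Wt \<eta> N t G Ls w", OF eta HI fin]
    by (simp add: Good_def)
  then have G: "Good \<eta> N ?u (G t) (Ls t) (Strat \<eta> N t G Ls w)"
    using pickp_prop unfolding Strat_def by blast
  have "w t = 0 \<or> w t = 1" using Hw step by auto
  then have "AA \<eta> {1..N} ?u (G t) (Ls t) (w t) (Strat \<eta> N t G Ls w) \<le> (\<Sum>n\<in>{1..N}. ?u n)"
    using G unfolding Good_def by auto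
  then have "(\<Sum>n\<in>{1..N}. Wt \<eta> N (Suc t) G Ls w n) \<le> (\<Sum>n\<in>{1..N}. ?u n)"
    by (simp only: Wt_sum_step[OF t0])
  also have "\<dots> \<le> ennreal (real N)" by (rule step.IH)
  finally show ?case .
qed

lemma Wt_prod:
  "Wt \<eta> N (Suc T) G Ls w n = (\<Prod>t\<in>{1..T}. EE \<eta> (Ls t n (Strat \<eta> N t G Ls w) (w t)) * inverse (EE \<eta> (Ls t n (G t n) (w t))))"
proof (induction T)
  case 0 then show ?case by simp
next
  case (Suc T)
  have "Wt \<eta> N (Suc (Suc T)) G Ls w n = Wt \<eta> N (Suc T) G Ls w n *
     (EE \<eta> (Ls (Suc T) n (Strat \<eta> N (Suc T) G Ls w) (w (Suc T))) * inverse (EE \<eta> (Ls (Suc T) n (G (Suc T) n) (w (Suc T)))))"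
    by (simp add: Strat_def mult.assoc)
  then show ?case using Suc.IH by (simp add: prod.nat_ivl_Suc' mult.commute)
qed

theorem corollary1:
  fixes \<eta> :: real and N :: nat
  assumes "\<eta> > 0"
  shows "\<exists>S. nonanticipating S \<and> (\<forall>t G Ls w. S t G Ls w \<in> {0..1}) \<and>
     (\<forall>G Ls w.
        (\<forall>t\<ge>1. \<forall>n\<in>{1..N}. G t n \<in> {0..1} \<and> Ls t n \<in> Lset \<and> eta_mixable \<eta> (Ls t n)) \<and>
        (\<forall>t\<ge>1. w t \<in> {0, 1}) \<longrightarrow>
        (\<forall>T\<ge>1. \<forall>n\<in>{1..N}.
           (\<Sum>t\<in>{1..T}. Ls t n (S t G Ls w) (w t))
             \<le> (\<Sum>t\<in>{1..T}. Ls t n (G t n) (w t)) + ennreal (ln (real N) / \<eta>)))"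
proof (intro exI[of _ "Strat \<eta> N"] conjI)
  show "nonanticipating (Strat \<eta> N)" by (rule Strat_nonant)
  show "\<forall>t G Ls w. Strat \<eta> N t G Ls w \<in> {0..1}" using Strat_01 by blast
next
  show "\<forall>G Ls w.
        (\<forall>t\<ge>1. \<forall>n\<in>{1..N}. G t n \<in> {0..1} \<and> Ls t n \<in> Lset \<and> eta_mixable \<eta> (Ls t n)) \<and>
        (\<forall>t\<ge>1. w t \<in> {0, 1}) \<longrightarrow>
        (\<forall>T\<ge>1. \<forall>n\<in>{1..N}.
           (\<Sum>t\<in>{1..T}. Ls t n (Strat \<eta> N t G Ls w) (w t))
             \<le> (\<Sum>t\<in>{1..T}. Ls t n (G t n) (w t)) + ennreal (ln (real N) / \<eta>))"
  proof (intro allI impI ballI)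
  fix G :: "nat \<Rightarrow> nat \<Rightarrow> real" and Ls :: "nat \<Rightarrow> nat \<Rightarrow> loss" and w :: "nat \<Rightarrow> nat" and T n :: nat
  assume h: "(\<forall>t\<ge>1. \<forall>n\<in>{1..N}. G t n \<in> {0..1} \<and> Ls t n \<in> Lset \<and> eta_mixable \<eta> (Ls t n)) \<and>
        (\<forall>t\<ge>1. w t \<in> {0, 1})"
    and T: "T \<ge> 1" and n: "n \<in> {1..N}"
  have "Wt \<eta> N (Suc T) G Ls w n \<le> (\<Sum>n\<in>{1..N}. Wt \<eta> N (Suc T) G Ls w n)"
    using n by (intro member_le_sum) auto
  also have "\<dots> \<le> ennreal (real N)"
    using h by (intro Wt_bound[OF assms]) auto
  finally have "(\<Prod>t\<in>{1..T}. EE \<eta> (Ls t n (Strat \<eta> N t G Ls w) (w t)) * inverse (EE \<eta> (Ls t n (G t n) (w t)))) \<le> ennreal (real N)"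
    by (simp only: Wt_prod)
  moreover have "real N \<ge> 1" using n by auto
  ultimately show "(\<Sum>t\<in>{1..T}. Ls t n (Strat \<eta> N t G Ls w) (w t))
             \<le> (\<Sum>t\<in>{1..T}. Ls t n (G t n) (w t)) + ennreal (ln (real N) / \<eta>)"
    by (intro final_ineq[OF assms]) auto
  qed
qed

end
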